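(* Let $r=2$ and $m=2n$. Let the utilities $u_i(j)$ ($i\in[n]$, $j\in[m]$) be drawn independently from a distribution $\mathcal{U}$ on $[0,1]$ that is $(\underline{\theta},q)$-polynomially bounded below at 1 and $(\overline{\theta},q)$-polynomially bounded above at 1, for constants $\underline{\theta},\overline{\theta},q>0$, and let $\tau:=1-\left(\frac{64\log m}{\underline{\theta}n}\right)^{1/q}$. Let $E_{\geq\tau}=\{(i,j): u_i(j)\geq\tau\}$ and let $E^*_{\geq\tau}$ be the edge set produced by ThresholdMatchingWithRemoval$_\tau$ (see context). Then, with high probability, the bipartite graph $(N,M,E_{\geq\tau}\setminus E^*_{\geq\tau})$ has maximum degree at most 2.
   Context: Agents are $N=[n]$, items $M=[m]$. A distribution $\mathcal{U}$ on $[0,1]$ is $(\theta,q)$-polynomially bounded below (resp. above) at 1 if for all $\alpha\in(0,1]$, $\Pr_{u\sim\mathcal{U}}[u>1-\alpha]\geq\theta\alpha^q$ (resp. $\leq\theta\alpha^q$). For a finite multiset $S$ of reals, sum-top$_r(S)$ is the sum of its $r$ largest elements (or of all elements if $|S|<r$). Procedure ThresholdMatchingWithRemoval$_\tau$: for each agent $i=1,\dots,n$, set $M^*_{\geq\tau}(i)\leftarrow\{j\in M: u_i(j)\geq\tau\}$; then for each $i'\in N\setminus\{i\}$ in turn, while sum-top$_r(\{u_{i'}(j): j\in M^*_{\geq\tau}(i)\})>r\tau$ (as a multiset), remove from $M^*_{\geq\tau}(i)$ the item(s) $j\in M^*_{\geq\tau}(i)$ maximizing $u_{i'}(j)$. Then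 $E^*_{\geq\tau}=\{(i,j): j\in M^*_{\geq\tau}(i)\text{ at the end}\}$. $\log$ is natural. "With high probability" means with probability tending to 1 as $n\to\infty$. *)

theory Defs
  imports "HOL-Probability.Probability"
begin

text \<open>Agents are 0..n-1 (paper: 1..n, same order), items 0..m-1.\<close>

definition sum_top :: "nat \<Rightarrow> real multiset \<Rightarrow> real" where
  "sum_top r S = sum_list (take r (rev (sorted_list_of_multiset S)))"

definition poly_bounded_below :: "real measure \<Rightarrow> real \<Rightarrow> real \<Rightarrow> bool" where
  "poly_bounded_below U \<theta> q \<longleftrightarrow>
     (\<forall>\<alpha>\<in>{0<..1}. measure U {x. x > 1 - \<alpha>} \<ge> \<theta> * \<alpha> powr q)"

definition poly_bounded_above :: "real measure \<Rightarrow> real \<Rightarrow> real \<Rightarrow> bool" where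
  "poly_bounded_above U \<theta> q \<longleftrightarrow>
     (\<forall>\<alpha>\<in>{0<..1}. measure U {x. x > 1 - \<alpha>} \<le> \<theta> * \<alpha> powr q)"

text \<open>The inner while loop for a fixed other agent with utility function v:
  while sum-top_r of the multiset of v-values on S exceeds r*tau, remove all
  maximisers of v on S.  The fuel (card S) suffices, since each iteration
  removes at least one item; on the empty set the loop stops.\<close>
fun shrink :: "nat \<Rightarrow> (nat \<Rightarrow> real) \<Rightarrow> nat \<Rightarrow> real \<Rightarrow> nat set \<Rightarrow> nat set" where
  "shrink 0 v r \<tau> S = S"
| "shrink (Suc k) v r \<tau> S =
     (if S \<noteq> {} \<and> sum_top r (image_mset v (mset_set S)) > real r * \<tau>
      then shrink k v r \<tau> (S - {j\<in>S. v j = Max (v ` S)})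
      else S)"

definition Mstar :: "nat \<Rightarrow> nat \<Rightarrow> (nat \<Rightarrow> nat \<Rightarrow> real) \<Rightarrow> nat \<Rightarrow> real \<Rightarrow> nat \<Rightarrow> nat set" where
  "Mstar n m u r \<tau> i =
     foldl (\<lambda>S i'. if i' = i then S else shrink (card S) (u i') r \<tau> S)
           {j. j < m \<and> u i j \<ge> \<tau>} [0..<n]"

definition Estar :: "nat \<Rightarrow> nat \<Rightarrow> (nat \<Rightarrow> nat \<Rightarrow> real) \<Rightarrow> nat \<Rightarrow> real \<Rightarrow> (nat \<times> nat) set" where
  "Estar n m u r \<tau> = {(i, j). i < n \<and> j \<in> Mstar n m u r \<tau> i}"

definition Ethr :: "nat \<Rightarrow> nat \<Rightarrow> (nat \<Rightarrow> nat \<Rightarrow> real) \<Rightarrow> real \<Rightarrow> (nat \<times> nat) set" where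
  "Ethr n m u \<tau> = {(i, j). i < n \<and> j < m \<and> u i j \<ge> \<tau>}"

definition max_degree_le :: "nat \<Rightarrow> nat \<Rightarrow> (nat \<times> nat) set \<Rightarrow> nat \<Rightarrow> bool" where
  "max_degree_le n m E d \<longleftrightarrow>
     (\<forall>i<n. card {j. j < m \<and> (i, j) \<in> E} \<le> d) \<and>
     (\<forall>j<m. card {i. i < n \<and> (i, j) \<in> E} \<le> d)"

definition tau :: "real \<Rightarrow> real \<Rightarrow> nat \<Rightarrow> nat \<Rightarrow> real" where
  "tau \<theta> q n m = 1 - (64 * ln (real m) / (\<theta> * real n)) powr (1 / q)"

end

theory Submission
  imports Defs "HOL-Real_Asymp.Real_Asymp"
begin

lemma top2_pair:
  assumes "finite S" "\<forall>j\<in>S. v j \<le> (1::real)" "\<tau> > 1/2"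
    "sum_top 2 (image_mset v (mset_set S)) > 2*\<tau>"
  shows "\<exists>a\<in>S. \<exists>b\<in>S. a \<noteq> b \<and> v a + v b > 2*\<tau>"
proof -
  define M where "M = image_mset v (mset_set S)"
  define xs where "xs = rev (sorted_list_of_multiset M)"
  have mx: "mset xs = M" unfolding xs_def by simp
  have le1: "x \<le> 1" if "x \<in># M" for x using that assms(1,2) unfolding M_def by auto
  have st: "sum_top 2 M = sum_list (take 2 xs)" unfolding sum_top_def xs_def by simp
  show ?thesis
  proof (cases xs)
    case Nil then show ?thesis using st assms(3,4) M_def by simp
  next
    case (Cons x ys)
    show ?thesis
    proof (cases ys)
      case Nil
      then have "M = {#x#}" using mx Cons by simp
      then have "sum_top 2 M = x" "x \<in># M" using st Cons \<open>xs = x # ys\<close> \<open>ys = []\<close> by auto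
      then show ?thesis using le1 assms(3,4) M_def by fastforce
    next
      case (Cons y zs)
      have s: "sum_top 2 M = x + y" using st Cons \<open>xs = x # ys\<close> by simp
      have sub: "{#x, y#} \<subseteq># M" using mx Cons \<open>xs = x # ys\<close> by auto
      then have "x \<in># M" by (simp add: mset_subset_eq_insertD)
      then obtain a where a: "a \<in> S" "v a = x" using assms(1) unfolding M_def by auto
      have "{#a#} \<subseteq># mset_set S" using a assms(1) by simp
      then have "M - {#x#} = image_mset v (mset_set S - {#a#})"
        unfolding M_def using a by (simp add: image_mset_Diff)
      also have "mset_set S - {#a#} = mset_set (S - {a})"
        using a assms(1) by (simp add: mset_set_Diff)
      finally have eq: "M - {#x#} = image_mset v (mset_set (S - {a}))" .
      have "y \<in># M - {#x#}" using sub
        by (metis add_mset_add_single insert_DiffM2 mset_subset_eq_insertD union_single_eq_member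
            mset_subset_eq_add_mset_cancel subset_mset.add_diff_inverse)
      then obtain b where b: "b \<in> S - {a}" "v b = y" using eq assms(1) by auto
      have "b \<in> S" "b \<noteq> a" using b by auto
      moreover have "v a + v b > 2*\<tau>" using a b s assms(4) M_def by auto
      ultimately show ?thesis using a(1) by metis
    qed
  qed
qed


lemma shrink_subset: "shrink k v r \<tau> S \<subseteq> S"
proof (induction k arbitrary: S)
  case 0 then show ?case by simp
next
  case (Suc k) then show ?case by (simp, blast)
qed

lemma shrink_removed:
  assumes "finite S" "\<forall>j\<in>S. v j \<le> (1::real)" "\<tau> > 1/2" "j \<in> S" "j \<notin> shrink k v 2 \<tau> S"
  shows "\<exists>j'\<in>S. j' \<noteq> j \<and> v j > 2*\<tau>-1 \<and> v j' > 2*\<tau>-1"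
  using assms
proof (induction k arbitrary: S)
  case 0 then show ?case by simp
next
  case (Suc k)
  define S' where "S' = S - {j\<in>S. v j = Max (v ` S)}"
  show ?case
  proof (cases "S \<noteq> {} \<and> sum_top 2 (image_mset v (mset_set S)) > real 2 * \<tau>")
    case True
    then have sh: "shrink (Suc k) v 2 \<tau> S = shrink k v 2 \<tau> S'" unfolding S'_def by simp
    show ?thesis
    proof (cases "j \<in> S'")
      case True
      have "\<exists>j'\<in>S'. j' \<noteq> j \<and> v j > 2*\<tau>-1 \<and> v j' > 2*\<tau>-1"
        using Suc.IH[of S'] Suc.prems True sh unfolding S'_def by auto
      then show ?thesis unfolding S'_def by auto
    next
      case False
      then have vj: "v j = Max (v ` S)" using Suc.prems unfolding S'_def by auto
      have "sum_top 2 (image_mset v (mset_set S)) > 2 * \<tau>" using True by simp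
      then obtain a b where ab: "a \<in> S" "b \<in> S" "a \<noteq> b" "v a + v b > 2*\<tau>"
        using top2_pair[of S v \<tau>] Suc.prems by auto
      have "v a \<le> 1" "v b \<le> 1" using ab Suc.prems by auto
      then have ga: "v a > 2*\<tau>-1" "v b > 2*\<tau>-1" using ab by auto
      have "v a \<le> v j" using vj ab Suc.prems(1) by (simp add: Max_ge)
      then show ?thesis using ga ab by (metis less_le_trans)
    qed
  next
    case False
    then show ?thesis using Suc.prems by (simp split: if_splits)
  qed
qed

lemma foldl_removed:
  "j \<in> S0 \<Longrightarrow> j \<notin> foldl (\<lambda>S i'. if i' = i then S else shrink (card S) (u i') r \<tau> S) S0 l \<Longrightarrow>
   \<exists>i'\<in>set l. i' \<noteq> i \<and> (\<exists>S \<subseteq> S0. j \<in> S \<and> j \<notin> shrink (card S) (u i') r \<tau> S)"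
proof (induction l arbitrary: S0)
  case Nil then show ?case by simp
next
  case (Cons x l)
  define S1 where "S1 = (if x = i then S0 else shrink (card S0) (u x) r \<tau> S0)"
  have S1sub: "S1 \<subseteq> S0" unfolding S1_def using shrink_subset by auto
  have f: "j \<notin> foldl (\<lambda>S i'. if i' = i then S else shrink (card S) (u i') r \<tau> S) S1 l"
    using Cons.prems unfolding S1_def by simp
  show ?case
  proof (cases "j \<in> S1")
    case True
    from Cons.IH[OF True f] S1sub show ?thesis by force
  next
    case False
    then have "x \<noteq> i" using Cons.prems unfolding S1_def by auto
    then show ?thesis using False Cons.prems(1) unfolding S1_def by auto
  qed
qed

lemma removed_rect:
  assumes "\<tau> > 1/2" "\<tau> < 1" "\<forall>i<n. \<forall>j<m. u i j \<le> (1::real)" "i < n" "j < m" "u i j \<ge> \<tau>"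
    "j \<notin> Mstar n m u 2 \<tau> i"
  shows "\<exists>i'<n. \<exists>j'<m. i' \<noteq> i \<and> j' \<noteq> j \<and> u i j > 2*\<tau>-1 \<and> u i j' > 2*\<tau>-1 \<and>
          u i' j > 2*\<tau>-1 \<and> u i' j' > 2*\<tau>-1"
proof -
  define S0 where "S0 = {j. j < m \<and> u i j \<ge> \<tau>}"
  have "j \<in> S0" using assms unfolding S0_def by auto
  from foldl_removed[OF this, of i u 2 \<tau> "[0..<n]"] assms(7)
  obtain i' S where i': "i' < n" "i' \<noteq> i" "S \<subseteq> S0" "j \<in> S" "j \<notin> shrink (card S) (u i') 2 \<tau> S"
    unfolding Mstar_def S0_def by auto
  have fin: "finite S" using i'(3) unfolding S0_def by (rule finite_subset) auto
  have "\<forall>j\<in>S. u i' j \<le> 1" using i'(1,3) assms(3) unfolding S0_def by auto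
  from shrink_removed[OF fin this assms(1) i'(4,5)]
  obtain j' where j': "j' \<in> S" "j' \<noteq> j" "u i' j > 2*\<tau>-1" "u i' j' > 2*\<tau>-1" by auto
  have "j' < m" "u i j' \<ge> \<tau>" using j'(1) i'(3) unfolding S0_def by auto
  then show ?thesis using i' j' assms(2,6) by (intro exI[of _ i'] conjI exI[of _ j']) auto
qed


definition "K23 G \<longleftrightarrow> (\<exists>a b x y z. a\<noteq>b \<and> x\<noteq>y \<and> x\<noteq>z \<and> y\<noteq>z \<and>
   G a x \<and> G a y \<and> G a z \<and> G b x \<and> G b y \<and> G b z)"
definition "K32 G \<longleftrightarrow> (\<exists>a b c x y. a\<noteq>b \<and> a\<noteq>c \<and> b\<noteq>c \<and> x\<noteq>y \<and>
   G a x \<and> G a y \<and> G b x \<and> G b y \<and> G c x \<and> G c y)"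
definition "D3 G \<longleftrightarrow> (\<exists>s t t' u v v'. s\<noteq>t \<and> s\<noteq>t' \<and> t\<noteq>t' \<and> u\<noteq>v \<and> u\<noteq>v' \<and> v\<noteq>v' \<and>
   G s u \<and> G s v \<and> G t u \<and> G t v \<and> G s v' \<and> G t' u \<and> G t' v')"
definition "D4 G \<longleftrightarrow> (\<exists>s t t' x y z w. s\<noteq>t \<and> s\<noteq>t' \<and> t\<noteq>t' \<and>
   x\<noteq>y \<and> x\<noteq>z \<and> x\<noteq>w \<and> y\<noteq>z \<and> y\<noteq>w \<and> z\<noteq>w \<and>
   G s x \<and> G s y \<and> G t x \<and> G t y \<and> G s z \<and> G s w \<and> G t' z \<and> G t' w)"
definition "D5 G \<longleftrightarrow> (\<exists>a b c d u v w. a\<noteq>b \<and> a\<noteq>c \<and> a\<noteq>d \<and> b\<noteq>c \<and> b\<noteq>d \<and> c\<noteq>d \<and>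
   u\<noteq>v \<and> u\<noteq>w \<and> v\<noteq>w \<and>
   G a u \<and> G a v \<and> G b u \<and> G b v \<and> G c u \<and> G c w \<and> G d u \<and> G d w)"

definition "BadG G \<longleftrightarrow> K23 G \<or> K32 G \<or> D3 G \<or> D4 G \<or> D5 G"

lemma two_sets:
  assumes "a \<noteq> b" "a' \<noteq> b'" "{a,b} \<noteq> {a',b'}" "{a,b} \<inter> {a',b'} \<noteq> {}"
  shows "\<exists>s t t'. {a,b} = {s,t} \<and> {a',b'} = {s,t'} \<and> s \<noteq> t \<and> s \<noteq> t' \<and> t \<noteq> t'"
  using assms by (cases "a = a'"; cases "a = b'"; cases "b = a'"; cases "b = b'") (auto; blast)+

lemma share:
  assumes d: "a \<noteq> b" "a' \<noteq> b'" "x \<noteq> y" "x' \<noteq> y'"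
    and r1: "\<forall>p\<in>{a,b}. \<forall>q\<in>{x,y}. G p q"
    and r2: "\<forall>p\<in>{a',b'}. \<forall>q\<in>{x',y'}. G p q"
    and sh: "{a,b} \<inter> {a',b'} \<noteq> {} \<or> {x,y} \<inter> {x',y'} \<noteq> {}"
    and nb: "\<not> BadG G"
  shows "{a,b} = {a',b'} \<and> {x,y} = {x',y'}"
proof (rule ccontr)
  assume ne: "\<not> ?thesis"
  show False
  proof (cases "{a,b} = {a',b'}")
    case True
    then have "{x,y} \<noteq> {x',y'}" using ne by auto
    then obtain z where z: "z \<in> {x',y'}" "z \<notin> {x,y}" using d by blast
    have "K23 G" unfolding K23_def
      apply (rule exI[of _ a], rule exI[of _ b], rule exI[of _ x], rule exI[of _ y], rule exI[of _ z])
      using d z r1 r2 True by auto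
    then show False using nb unfolding BadG_def by auto
  next
    case F1: False
    show False
    proof (cases "{x,y} = {x',y'}")
      case True
      then obtain c where c: "c \<in> {a',b'}" "c \<notin> {a,b}" using d F1 by blast
      have "K32 G" unfolding K32_def
        apply (rule exI[of _ a], rule exI[of _ b], rule exI[of _ c], rule exI[of _ x], rule exI[of _ y])
        using d c r1 r2 True by auto
      then show False using nb unfolding BadG_def by auto
    next
      case F2: False
      show False
      proof (cases "{a,b} \<inter> {a',b'} \<noteq> {}")
        case A: True
        obtain s t t' where st: "{a,b} = {s,t}" "{a',b'} = {s,t'}" "s \<noteq> t" "s \<noteq> t'" "t \<noteq> t'"
          using two_sets[OF d(1,2) F1 A] by blast
        show False
        proof (cases "{x,y} \<inter> {x',y'} \<noteq> {}")
          case B: True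
          obtain u v v' where uv: "{x,y} = {u,v}" "{x',y'} = {u,v'}" "u \<noteq> v" "u \<noteq> v'" "v \<noteq> v'"
            using two_sets[OF d(3,4) F2 B] by blast
          have "D3 G" unfolding D3_def
            apply (rule exI[of _ s], rule exI[of _ t], rule exI[of _ t'], rule exI[of _ u],
                   rule exI[of _ v], rule exI[of _ v'])
            using st uv r1 r2 by simp
          then show False using nb unfolding BadG_def by auto
        next
          case B: False
          have "D4 G" unfolding D4_def
            apply (rule exI[of _ s], rule exI[of _ t], rule exI[of _ t'], rule exI[of _ x],
                   rule exI[of _ y], rule exI[of _ x'], rule exI[of _ y'])
            using st d B r1 r2 by auto
          then show False using nb unfolding BadG_def by auto
        qed
      next
        case A: False
        then have B: "{x,y} \<inter> {x',y'} \<noteq> {}" using sh by auto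
        obtain u v v' where uv: "{x,y} = {u,v}" "{x',y'} = {u,v'}" "u \<noteq> v" "u \<noteq> v'" "v \<noteq> v'"
          using two_sets[OF d(3,4) F2 B] by blast
        have "D5 G" unfolding D5_def
          apply (rule exI[of _ a], rule exI[of _ b], rule exI[of _ a'], rule exI[of _ b'], rule exI[of _ u],
                 rule exI[of _ v], rule exI[of _ v'])
          using uv d A r1 r2 by auto
        then show False using nb unfolding BadG_def by auto
      qed
    qed
  qed
qed


lemma E_mem: "(i,j) \<in> Ethr n m u \<tau> - Estar n m u r \<tau> \<longleftrightarrow>
   i < n \<and> j < m \<and> u i j \<ge> \<tau> \<and> j \<notin> Mstar n m u r \<tau> i"
  unfolding Ethr_def Estar_def by auto

lemma card_le2: assumes "A \<subseteq> {x, y}" shows "card A \<le> 2"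
proof -
  have "card A \<le> card {x,y}" using assms by (intro card_mono) auto
  also have "card {x,y} \<le> 2" by (cases "x = y") auto
  finally show ?thesis .
qed

lemma det_good:
  assumes t: "\<tau> > 1/2" "\<tau> < 1" and le: "\<forall>i<n. \<forall>j<m. u i j \<le> (1::real)"
    and nb: "\<not> BadG (\<lambda>p q. p < n \<and> q < m \<and> u p q > 2*\<tau>-1)"
  shows "max_degree_le n m (Ethr n m u \<tau> - Estar n m u 2 \<tau>) 2"
proof -
  define G where "G = (\<lambda>p q. p < n \<and> q < m \<and> u p q > 2*\<tau>-1)"
  define E where "E = Ethr n m u \<tau> - Estar n m u 2 \<tau>"
  have wit: "\<exists>i' j'. i' \<noteq> i \<and> j' \<noteq> j \<and> (\<forall>p\<in>{i,i'}. \<forall>q\<in>{j,j'}. G p q)" if "(i,j) \<in> E" for i j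
  proof -
    have "i < n \<and> j < m \<and> u i j \<ge> \<tau> \<and> j \<notin> Mstar n m u 2 \<tau> i" using that E_mem unfolding E_def by metis
    from removed_rect[OF t le] this obtain i' j' where "i'<n" "j'<m" "i' \<noteq> i" "j' \<noteq> j"
      "u i j > 2*\<tau>-1" "u i j' > 2*\<tau>-1" "u i' j > 2*\<tau>-1" "u i' j' > 2*\<tau>-1" by blast
    then show ?thesis using \<open>i < n \<and> j < m \<and> _\<close> unfolding G_def by auto
  qed
  have nb': "\<not> BadG G" using nb unfolding G_def .
  have agent: "card {j. j < m \<and> (i, j) \<in> E} \<le> 2" for i
  proof (cases "{j. j < m \<and> (i, j) \<in> E} = {}")
    case True then show ?thesis unfolding True by simp
  next
    case False
    then obtain j0 where j0: "(i,j0) \<in> E" by auto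
    obtain i0 j0' where w0: "i0 \<noteq> i" "j0' \<noteq> j0" "\<forall>p\<in>{i,i0}. \<forall>q\<in>{j0,j0'}. G p q" using wit[OF j0] by blast
    have "{j. j < m \<and> (i, j) \<in> E} \<subseteq> {j0, j0'}"
    proof safe
      fix j assume "j < m" "(i,j) \<in> E" "j \<noteq> j0"
      obtain i' j' where w: "i' \<noteq> i" "j' \<noteq> j" "\<forall>p\<in>{i,i'}. \<forall>q\<in>{j,j'}. G p q" using wit[OF \<open>(i,j)\<in>E\<close>] by blast
      have "{i,i'} = {i,i0} \<and> {j,j'} = {j0,j0'}"
        by (rule share[OF _ _ _ _ w(3) w0(3) _ nb']) (use w w0 in auto)
      then show "j = j0'" using \<open>j \<noteq> j0\<close> by (metis insertCI insertE singletonD)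
    qed
    then show ?thesis by (rule card_le2)
  qed
  have item: "card {i. i < n \<and> (i, j) \<in> E} \<le> 2" for j
  proof (cases "{i. i < n \<and> (i, j) \<in> E} = {}")
    case True then show ?thesis unfolding True by simp
  next
    case False
    then obtain i0 where i0: "(i0,j) \<in> E" by auto
    obtain i0' j0 where w0: "i0' \<noteq> i0" "j0 \<noteq> j" "\<forall>p\<in>{i0,i0'}. \<forall>q\<in>{j,j0}. G p q" using wit[OF i0] by blast
    have "{i. i < n \<and> (i, j) \<in> E} \<subseteq> {i0, i0'}"
    proof safe
      fix i assume "i < n" "(i,j) \<in> E" "i \<noteq> i0"
      obtain i' j' where w: "i' \<noteq> i" "j' \<noteq> j" "\<forall>p\<in>{i,i'}. \<forall>q\<in>{j,j'}. G p q" using wit[OF \<open>(i,j)\<in>E\<close>] by blast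
      have "{i,i'} = {i0,i0'} \<and> {j,j'} = {j,j0}"
        by (rule share[OF _ _ _ _ w(3) w0(3) _ nb']) (use w w0 in auto)
      then show "i = i0'" using \<open>i \<noteq> i0\<close> by (metis insertCI insertE singletonD)
    qed
    then show ?thesis by (rule card_le2)
  qed
  show ?thesis unfolding max_degree_le_def E_def[symmetric] using agent item by auto
qed


lemma map_insort_key: "map f (insort_key f x ys) = insort (f x) (map f ys)"
  by (induction ys) auto

lemma map_sort_key: "map f (sort_key f xs) = sort (map f xs)"
  by (induction xs) (auto simp: map_insort_key)

lemma sum_top_eq:
  assumes "finite S"
  shows "sum_top r (image_mset f (mset_set S)) =
         sum_list (map f (take r (rev (sort_key f (sorted_list_of_set S)))))"
proof -
  have "mset_set S = mset (sorted_list_of_set S)"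
    using assms by (metis distinct_sorted_list_of_set mset_set_set set_sorted_list_of_set)
  then have "image_mset f (mset_set S) = mset (map f (sorted_list_of_set S))" by (simp add: mset_map)
  then show ?thesis unfolding sum_top_def
    by (simp only: sorted_list_of_multiset_mset map_sort_key[symmetric] rev_map take_map)
qed

lemma setfun_meas:
  assumes "finite A" "\<forall>\<omega>\<in>space M. g \<omega> \<subseteq> A" "\<forall>a\<in>A. {\<omega>\<in>space M. a \<in> g \<omega>} \<in> sets M"
  shows "g \<in> M \<rightarrow>\<^sub>M count_space UNIV"
  unfolding measurable_def
proof (safe)
  fix X
  have eq: "g -` X \<inter> space M = (\<Union>s\<in>X \<inter> Pow A. {\<omega>\<in>space M. \<forall>a\<in>A. (a \<in> g \<omega> \<longleftrightarrow> a \<in> s)})"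
  proof (intro equalityI subsetI)
    fix \<omega> assume "\<omega> \<in> g -` X \<inter> space M"
    then show "\<omega> \<in> (\<Union>s\<in>X \<inter> Pow A. {\<omega>\<in>space M. \<forall>a\<in>A. (a \<in> g \<omega> \<longleftrightarrow> a \<in> s)})"
      using assms(2) by (intro UN_I[of "g \<omega>"]) auto
  next
    fix \<omega> assume "\<omega> \<in> (\<Union>s\<in>X \<inter> Pow A. {\<omega>\<in>space M. \<forall>a\<in>A. (a \<in> g \<omega> \<longleftrightarrow> a \<in> s)})"
    then obtain s where s: "s \<in> X" "s \<subseteq> A" "\<omega> \<in> space M" "\<forall>a\<in>A. (a \<in> g \<omega> \<longleftrightarrow> a \<in> s)" by auto
    then have "g \<omega> = s" using assms(2) by blast
    then show "\<omega> \<in> g -` X \<inter> space M" using s by auto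
  qed
  have m: "{\<omega>\<in>space M. \<forall>a\<in>A. (a \<in> g \<omega> \<longleftrightarrow> a \<in> s)} \<in> sets M" for s
  proof (rule sets.sets_Collect_finite_All[OF _ assms(1)])
    fix a assume "a \<in> A"
    show "{\<omega>\<in>space M. (a \<in> g \<omega> \<longleftrightarrow> a \<in> s)} \<in> sets M"
    proof (cases "a \<in> s")
      case True then show ?thesis using assms(3) \<open>a\<in>A\<close> by simp
    next
      case False
      have "{\<omega>\<in>space M. \<not> a \<in> g \<omega>} \<in> sets M"
      proof -
        have "{\<omega>\<in>space M. \<not> a \<in> g \<omega>} = space M - {\<omega>\<in>space M. a \<in> g \<omega>}" by auto
        then show ?thesis using assms(3) \<open>a\<in>A\<close> by auto
      qed
      then show ?thesis using False by simp
    qed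
  qed
  show "g -` X \<inter> space M \<in> sets M" unfolding eq
    by (rule sets.finite_UN) (use assms(1) m in auto)
qed auto

lemma insort_meas:
  assumes "\<And>j::nat. (\<lambda>\<omega>. f \<omega> j :: real) \<in> borel_measurable M"
  shows "(\<lambda>\<omega>. insort_key (f \<omega>) x ys) \<in> M \<rightarrow>\<^sub>M count_space UNIV"
proof (induction ys)
  case Nil then show ?case by simp
next
  case (Cons y ys)
  have c: "(\<lambda>\<omega>. y # insort_key (f \<omega>) x ys) \<in> M \<rightarrow>\<^sub>M count_space UNIV"
    using measurable_compose[OF Cons.IH measurable_count_space[of "Cons y" UNIV]] by simp
  have p: "{\<omega>\<in>space M. f \<omega> x \<le> f \<omega> y} \<in> sets M" using assms by measurable
  show ?case by (simp, rule measurable_If[OF _ c p]) simp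
qed

lemma sort_key_meas:
  assumes "\<And>j::nat. (\<lambda>\<omega>. f \<omega> j :: real) \<in> borel_measurable M"
  shows "(\<lambda>\<omega>. sort_key (f \<omega>) L) \<in> M \<rightarrow>\<^sub>M count_space UNIV"
proof (induction L)
  case Nil then show ?case by simp
next
  case (Cons x L)
  show ?case
    using measurable_compose_countable[where f="\<lambda>ys \<omega>. insort_key (f \<omega>) x ys",
        OF insort_meas[OF assms] Cons.IH] by simp
qed

lemma sum_list_meas:
  assumes "\<And>j::nat. (\<lambda>\<omega>. f \<omega> j :: real) \<in> borel_measurable M"
  shows "(\<lambda>\<omega>. sum_list (map (f \<omega>) ys) :: real) \<in> borel_measurable M"
  by (induction ys) (use assms in auto)

lemma sum_top_meas:
  assumes "\<And>j::nat. (\<lambda>\<omega>. f \<omega> j :: real) \<in> borel_measurable M" "finite (S::nat set)"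
  shows "(\<lambda>\<omega>. sum_top r (image_mset (f \<omega>) (mset_set S))) \<in> borel_measurable M"
proof -
  have "(\<lambda>\<omega>. sum_list (map (f \<omega>) (take r (rev (sort_key (f \<omega>) (sorted_list_of_set S)))))) \<in> borel_measurable M"
    using measurable_compose_countable[where f="\<lambda>ys \<omega>. sum_list (map (f \<omega>) (take r (rev ys)))",
        OF sum_list_meas[OF assms(1)] sort_key_meas[OF assms(1)]] by simp
  then show ?thesis using sum_top_eq[OF assms(2)] by simp
qed


lemma compose_fin:
  assumes "g \<in> M \<rightarrow>\<^sub>M count_space UNIV" "\<forall>\<omega>\<in>space M. g \<omega> \<in> A" "countable A"
    "\<And>a. a \<in> A \<Longrightarrow> (\<lambda>\<omega>. h a \<omega>) \<in> M \<rightarrow>\<^sub>M N"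
  shows "(\<lambda>\<omega>. h (g \<omega>) \<omega>) \<in> M \<rightarrow>\<^sub>M N"
proof (rule measurable_compose_countable'[OF assms(4) _ assms(3)])
  show "g \<in> M \<rightarrow>\<^sub>M count_space A"
    unfolding measurable_count_space_eq_countable[OF assms(3)]
  proof
    show "g \<in> space M \<rightarrow> A" using assms(2) by auto
    show "\<forall>a\<in>A. g -` {a} \<inter> space M \<in> sets M"
      using measurable_sets[OF assms(1)] by auto
  qed
qed

lemma shrink_meas:
  assumes coord: "\<And>j::nat. (\<lambda>\<omega>. f \<omega> j :: real) \<in> borel_measurable M" and fin: "finite S"
  shows "(\<lambda>\<omega>. shrink k (f \<omega>) r \<tau> S) \<in> M \<rightarrow>\<^sub>M count_space UNIV"
  using fin
proof (induction k arbitrary: S)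
  case 0 then show ?case by simp
next
  case (Suc k)
  define g where "g = (\<lambda>\<omega>. S - {j\<in>S. f \<omega> j = Max (f \<omega> ` S)})"
  have gm: "g \<in> M \<rightarrow>\<^sub>M count_space UNIV"
  proof (rule setfun_meas[of S])
    show "finite S" by fact
    show "\<forall>\<omega>\<in>space M. g \<omega> \<subseteq> S" unfolding g_def by auto
    show "\<forall>a\<in>S. {\<omega> \<in> space M. a \<in> g \<omega>} \<in> sets M"
    proof
      fix a assume "a \<in> S"
      have "(\<lambda>\<omega>. Max ((\<lambda>j. f \<omega> j) ` S)) \<in> borel_measurable M"
        by (rule borel_measurable_Max[OF Suc.prems]) (rule coord)
      then have "{\<omega> \<in> space M. f \<omega> a \<noteq> Max ((\<lambda>j. f \<omega> j) ` S)} \<in> sets M"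
        using coord by measurable
      then show "{\<omega> \<in> space M. a \<in> g \<omega>} \<in> sets M" unfolding g_def using \<open>a\<in>S\<close> by simp
    qed
  qed
  have th: "(\<lambda>\<omega>. shrink k (f \<omega>) r \<tau> (g \<omega>)) \<in> M \<rightarrow>\<^sub>M count_space UNIV"
  proof (rule compose_fin[OF gm, of "Collect finite"])
    show "\<forall>\<omega>\<in>space M. g \<omega> \<in> Collect finite" unfolding g_def using Suc.prems by auto
    show "countable (Collect (finite :: nat set \<Rightarrow> bool))" by (rule countable_Collect_finite)
    fix a :: "nat set" assume "a \<in> Collect finite"
    then show "(\<lambda>\<omega>. shrink k (f \<omega>) r \<tau> a) \<in> M \<rightarrow>\<^sub>M count_space UNIV" using Suc.IH by simp
  qed
  have sm: "(\<lambda>\<omega>. sum_top r (image_mset (f \<omega>) (mset_set S))) \<in> borel_measurable M"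
    by (rule sum_top_meas[OF coord Suc.prems])
  have p: "{\<omega> \<in> space M. S \<noteq> {} \<and> sum_top r (image_mset (f \<omega>) (mset_set S)) > real r * \<tau>} \<in> sets M"
    using sm by measurable
  have "(\<lambda>\<omega>. if S \<noteq> {} \<and> sum_top r (image_mset (f \<omega>) (mset_set S)) > real r * \<tau>
     then shrink k (f \<omega>) r \<tau> (g \<omega>) else S) \<in> M \<rightarrow>\<^sub>M count_space UNIV"
    by (rule measurable_If[OF th _ p]) simp
  then show ?case unfolding g_def by simp
qed


lemma foldl_meas:
  assumes coord: "\<And>i j. (\<lambda>\<omega>. u \<omega> i j :: real) \<in> borel_measurable M"
    and S0: "S0 \<in> M \<rightarrow>\<^sub>M count_space UNIV" "\<forall>\<omega>\<in>space M. finite (S0 \<omega> :: nat set)"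
  shows "(\<lambda>\<omega>. foldl (\<lambda>S i'. if i' = i then S else shrink (card S) (u \<omega> i') r \<tau> S) (S0 \<omega>) l)
           \<in> M \<rightarrow>\<^sub>M count_space UNIV"
  using S0
proof (induction l arbitrary: S0)
  case Nil then show ?case by simp
next
  case (Cons x l)
  define S1 where "S1 = (\<lambda>\<omega>. if x = i then S0 \<omega> else shrink (card (S0 \<omega>)) (u \<omega> x) r \<tau> (S0 \<omega>))"
  have m1: "S1 \<in> M \<rightarrow>\<^sub>M count_space UNIV" unfolding S1_def
  proof (rule compose_fin[OF Cons.prems(1), of "Collect finite"
        "\<lambda>a \<omega>. if x = i then a else shrink (card a) (u \<omega> x) r \<tau> a"])
    show "\<forall>\<omega>\<in>space M. S0 \<omega> \<in> Collect finite" using Cons.prems(2) by auto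
    show "countable (Collect (finite :: nat set \<Rightarrow> bool))" by (rule countable_Collect_finite)
    fix a :: "nat set" assume "a \<in> Collect finite"
    then show "(\<lambda>\<omega>. if x = i then a else shrink (card a) (u \<omega> x) r \<tau> a) \<in> M \<rightarrow>\<^sub>M count_space UNIV"
      using shrink_meas[of "\<lambda>\<omega>. u \<omega> x" M a "card a" r \<tau>] coord by (cases "x = i") auto
  qed
  have f1: "\<forall>\<omega>\<in>space M. finite (S1 \<omega>)"
    using Cons.prems(2) unfolding S1_def by (auto intro: finite_subset[OF shrink_subset])
  show ?case using Cons.IH[OF m1 f1] unfolding S1_def by simp
qed

lemma Mstar_meas:
  assumes coord: "\<And>i j. (\<lambda>\<omega>. u \<omega> i j :: real) \<in> borel_measurable M"
  shows "(\<lambda>\<omega>. Mstar n m (u \<omega>) r \<tau> i) \<in> M \<rightarrow>\<^sub>M count_space UNIV"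
proof -
  have S0: "(\<lambda>\<omega>. {j. j < m \<and> u \<omega> i j \<ge> \<tau>}) \<in> M \<rightarrow>\<^sub>M count_space UNIV"
  proof (rule setfun_meas[of "{..<m}"])
    show "\<forall>a\<in>{..<m}. {\<omega> \<in> space M. a \<in> {j. j < m \<and> \<tau> \<le> u \<omega> i j}} \<in> sets M"
    proof
      fix a assume "a \<in> {..<m}"
      have "{\<omega> \<in> space M. \<tau> \<le> u \<omega> i a} \<in> sets M" using coord by measurable
      then show "{\<omega> \<in> space M. a \<in> {j. j < m \<and> \<tau> \<le> u \<omega> i j}} \<in> sets M" using \<open>a \<in> {..<m}\<close> by simp
    qed
  qed auto
  show ?thesis unfolding Mstar_def
    by (rule foldl_meas[OF coord S0]) auto
qed

lemma good_meas:
  assumes coord: "\<And>i j. (\<lambda>\<omega>. u \<omega> i j :: real) \<in> borel_measurable M"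
  shows "{\<omega>\<in>space M. max_degree_le n m (Ethr n m (u \<omega>) \<tau> - Estar n m (u \<omega>) r \<tau>) d} \<in> sets M"
proof -
  have Em: "(\<lambda>\<omega>. Ethr n m (u \<omega>) \<tau> - Estar n m (u \<omega>) r \<tau>) \<in> M \<rightarrow>\<^sub>M count_space UNIV"
  proof (rule setfun_meas[of "{..<n} \<times> {..<m}"])
    show "\<forall>\<omega>\<in>space M. Ethr n m (u \<omega>) \<tau> - Estar n m (u \<omega>) r \<tau> \<subseteq> {..<n} \<times> {..<m}"
      unfolding Ethr_def by auto
    show "\<forall>a\<in>{..<n} \<times> {..<m}. {\<omega> \<in> space M. a \<in> Ethr n m (u \<omega>) \<tau> - Estar n m (u \<omega>) r \<tau>} \<in> sets M"
    proof
      fix a assume "a \<in> {..<n} \<times> {..<m}"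
      then obtain i j where a: "a = (i,j)" "i < n" "j < m" by auto
      have ms: "{\<omega> \<in> space M. j \<notin> Mstar n m (u \<omega>) r \<tau> i} \<in> sets M"
        using measurable_sets[OF Mstar_meas[OF coord, where n=n and m=m and r=r and \<tau>=\<tau> and i=i], of "{S. j \<notin> S}"]
        by (simp add: vimage_def Int_def conj_commute)
      have "{\<omega> \<in> space M. \<tau> \<le> u \<omega> i j} \<in> sets M" using coord by measurable
      then have "{\<omega> \<in> space M. \<tau> \<le> u \<omega> i j} \<inter> {\<omega> \<in> space M. j \<notin> Mstar n m (u \<omega>) r \<tau> i} \<in> sets M"
        using ms by auto
      moreover have "{\<omega> \<in> space M. a \<in> Ethr n m (u \<omega>) \<tau> - Estar n m (u \<omega>) r \<tau>} =
         {\<omega> \<in> space M. \<tau> \<le> u \<omega> i j} \<inter> {\<omega> \<in> space M. j \<notin> Mstar n m (u \<omega>) r \<tau> i}"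
        using a E_mem by auto
      ultimately show "{\<omega> \<in> space M. a \<in> Ethr n m (u \<omega>) \<tau> - Estar n m (u \<omega>) r \<tau>} \<in> sets M" by simp
    qed
  qed auto
  have "(\<lambda>\<omega>. max_degree_le n m (Ethr n m (u \<omega>) \<tau> - Estar n m (u \<omega>) r \<tau>) d) \<in> M \<rightarrow>\<^sub>M count_space UNIV"
    by (rule measurable_compose[OF Em measurable_count_space])
  then show ?thesis unfolding pred_def[symmetric] .
qed


lemma coord_meas:
  assumes "sets U = sets borel"
  shows "(\<lambda>\<omega>. \<omega> p :: real) \<in> borel_measurable (PiM I (\<lambda>_. U))"
proof (cases "p \<in> I")
  case True
  have "(\<lambda>\<omega>. \<omega> p) \<in> PiM I (\<lambda>_. U) \<rightarrow>\<^sub>M U" by (rule measurable_component_singleton[OF True])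
  then show ?thesis using measurable_cong_sets[OF refl assms] by blast
next
  case False
  have "(\<lambda>_. undefined :: real) \<in> borel_measurable (PiM I (\<lambda>_. U))" by simp
  then show ?thesis
    by (rule measurable_cong[THEN iffD1, rotated]) (use False in \<open>auto simp: space_PiM PiE_def extensional_def\<close>)
qed

lemma cyl:
  fixes U :: "real measure"
  assumes U: "prob_space U" "sets U = sets borel" and F: "finite F" "F \<subseteq> I"
  shows "{\<omega>\<in>space (PiM I (\<lambda>_. U)). \<forall>p\<in>F. \<omega> p > c} \<in> sets (PiM I (\<lambda>_. U))"
    and "measure (PiM I (\<lambda>_. U)) {\<omega>\<in>space (PiM I (\<lambda>_. U)). \<forall>p\<in>F. \<omega> p > c} =
         measure U {x. x > c} ^ card F"
proof -
  have sp: "space U = UNIV" using sets_eq_imp_space_eq[OF U(2)] by simp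
  have eq: "{\<omega>\<in>space (PiM I (\<lambda>_. U)). \<forall>p\<in>F. \<omega> p > c} =
        prod_emb I (\<lambda>_. U) F (PiE F (\<lambda>_. {x. x > c}))"
    using F(2) by (auto simp: prod_emb_def space_PiM sp PiE_def Pi_def)
  have ms: "{x::real. x > c} \<in> sets U" using U(2) by simp
  show "{\<omega>\<in>space (PiM I (\<lambda>_. U)). \<forall>p\<in>F. \<omega> p > c} \<in> sets (PiM I (\<lambda>_. U))"
    unfolding eq using F ms by (intro sets_PiM_I_finite measurable_prod_emb) auto
  have "emeasure (PiM I (\<lambda>_. U)) (prod_emb I (\<lambda>_. U) F (PiE F (\<lambda>_. {x. x > c}))) =
        (\<Prod>i\<in>F. emeasure U {x. x > c})"
    by (rule emeasure_PiM_emb) (use U F ms in auto)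
  also have "\<dots> = ennreal (measure U {x. x > c} ^ card F)"
  proof -
    interpret prob_space U by (rule U(1))
    show ?thesis by (simp add: emeasure_eq_measure prod_ennreal ennreal_power)
  qed
  finally show "measure (PiM I (\<lambda>_. U)) {\<omega>\<in>space (PiM I (\<lambda>_. U)). \<forall>p\<in>F. \<omega> p > c} =
         measure U {x. x > c} ^ card F"
    unfolding eq measure_def by simp
qed

lemma union_cyl:
  fixes U :: "real measure"
  assumes U: "prob_space U" "sets U = sets borel" and T: "finite T"
    and F: "\<And>t. t \<in> T \<Longrightarrow> F t \<subseteq> I \<and> finite (F t) \<and> card (F t) \<ge> e"
  shows "(\<Union>t\<in>T. {\<omega>\<in>space (PiM I (\<lambda>_. U)). \<forall>p\<in>F t. \<omega> p > c}) \<in> sets (PiM I (\<lambda>_. U))"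
    and "measure (PiM I (\<lambda>_. U)) (\<Union>t\<in>T. {\<omega>\<in>space (PiM I (\<lambda>_. U)). \<forall>p\<in>F t. \<omega> p > c})
          \<le> real (card T) * measure U {x. x > c} ^ e"
proof -
  show "(\<Union>t\<in>T. {\<omega>\<in>space (PiM I (\<lambda>_. U)). \<forall>p\<in>F t. \<omega> p > c}) \<in> sets (PiM I (\<lambda>_. U))"
    by (rule sets.finite_UN[OF T], rule cyl(1)[OF U]) (use F in auto)
  have "measure (PiM I (\<lambda>_. U)) (\<Union>t\<in>T. {\<omega>\<in>space (PiM I (\<lambda>_. U)). \<forall>p\<in>F t. \<omega> p > c})
        \<le> (\<Sum>t\<in>T. measure (PiM I (\<lambda>_. U)) {\<omega>\<in>space (PiM I (\<lambda>_. U)). \<forall>p\<in>F t. \<omega> p > c})"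
    by (rule measure_UNION_le[OF T], rule cyl(1)[OF U]) (use F in auto)
  also have "\<dots> = (\<Sum>t\<in>T. measure U {x. x > c} ^ card (F t))"
  proof (rule sum.cong[OF refl])
    fix t assume "t \<in> T"
    show "measure (PiM I (\<lambda>_. U)) {\<omega>\<in>space (PiM I (\<lambda>_. U)). \<forall>p\<in>F t. \<omega> p > c} = measure U {x. x > c} ^ card (F t)"
      by (rule cyl(2)[OF U]) (use F[OF \<open>t\<in>T\<close>] in auto)
  qed
  also have "\<dots> \<le> (\<Sum>t\<in>T. measure U {x. x > c} ^ e)"
  proof (rule sum_mono)
    fix t assume "t \<in> T"
    show "measure U {x. x > c} ^ card (F t) \<le> measure U {x. x > c} ^ e"
      by (rule power_decreasing) (use F[OF \<open>t\<in>T\<close>] prob_space.prob_le_1[OF U(1)] in auto)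
  qed
  also have "\<dots> = real (card T) * measure U {x. x > c} ^ e" by simp
  finally show "measure (PiM I (\<lambda>_. U)) (\<Union>t\<in>T. {\<omega>\<in>space (PiM I (\<lambda>_. U)). \<forall>p\<in>F t. \<omega> p > c})
          \<le> real (card T) * measure U {x. x > c} ^ e" .
qed


definition patbound :: "nat \<Rightarrow> nat \<Rightarrow> nat \<Rightarrow> ((nat \<times> nat) set \<Rightarrow> bool) \<Rightarrow> nat \<Rightarrow> bool" where
 "patbound n m e P N \<longleftrightarrow>
  (\<exists>FF. finite FF \<and> card FF \<le> N \<and> (\<forall>F\<in>FF. F \<subseteq> {..<n}\<times>{..<m} \<and> finite F \<and> card F \<ge> e) \<and>
    (\<forall>H. P H \<longrightarrow> (\<exists>F\<in>FF. F \<subseteq> H)))"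

lemma patboundI:
  assumes "finite T" "card T \<le> N" "\<And>t. t \<in> T \<Longrightarrow> F t \<subseteq> {..<n}\<times>{..<m} \<and> finite (F t) \<and> card (F t) \<ge> e"
    "\<And>H. P H \<Longrightarrow> \<exists>t\<in>T. F t \<subseteq> H"
  shows "patbound n m e P N"
  unfolding patbound_def
proof (intro exI[of _ "F ` T"] conjI allI impI ballI)
  show "finite (F ` T)" using assms(1) by simp
  show "card (F ` T) \<le> N" using card_image_le[OF assms(1), of F] assms(2) by linarith
  fix X assume "X \<in> F ` T"
  then show "X \<subseteq> {..<n}\<times>{..<m}" "finite X" "card X \<ge> e" using assms(3) by auto
next
  fix H assume "P H" then show "\<exists>X\<in>F ` T. X \<subseteq> H" using assms(4) by blast
qed

lemma K23_PB: "patbound n m 6 (\<lambda>H. K23 (\<lambda>p q. p < n \<and> q < m \<and> (p,q) \<in> H)) (n^2*m^3)"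
proof (rule patboundI)
  let ?T = "{(a,b,x,y,z). a<n \<and> b<n \<and> x<m \<and> y<m \<and> z<(m::nat) \<and> a\<noteq>(b::nat) \<and> x\<noteq>y \<and> x\<noteq>z \<and> y\<noteq>z}"
  let ?F = "\<lambda>(a,b,x,y,z). {(a,x),(a,y),(a,z),(b,x),(b,y),(b,z)} :: (nat\<times>nat) set"
  have sub: "?T \<subseteq> {..<n}\<times>{..<n}\<times>{..<m}\<times>{..<m}\<times>{..<m}" by auto
  show "finite ?T" by (rule finite_subset[OF sub]) auto
  show "card ?T \<le> n^2*m^3"
    using card_mono[OF _ sub] by (simp add: card_cartesian_product power2_eq_square power3_eq_cube)
  fix t assume "t \<in> ?T"
  then obtain a b x y z where t: "t = (a,b,x,y,z)" "a<n" "b<n" "x<m" "y<m" "z<m" "a\<noteq>b" "x\<noteq>y" "x\<noteq>z" "y\<noteq>z" by auto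
  show "?F t \<subseteq> {..<n}\<times>{..<m} \<and> finite (?F t) \<and> card (?F t) \<ge> 6" using t by auto
next
  fix H assume "K23 (\<lambda>p q. p < n \<and> q < m \<and> (p,q) \<in> H)"
  then obtain a b x y z where "a\<noteq>b" "x\<noteq>y" "x\<noteq>z" "y\<noteq>z" and h:
    "a<n" "b<n" "x<m" "y<m" "z<m" "(a,x)\<in>H" "(a,y)\<in>H" "(a,z)\<in>H" "(b,x)\<in>H" "(b,y)\<in>H" "(b,z)\<in>H"
    unfolding K23_def by blast
  then show "\<exists>t\<in>{(a,b,x,y,z). a<n \<and> b<n \<and> x<m \<and> y<m \<and> z<(m::nat) \<and> a\<noteq>(b::nat) \<and> x\<noteq>y \<and> x\<noteq>z \<and> y\<noteq>z}.
     (\<lambda>(a,b,x,y,z). {(a,x),(a,y),(a,z),(b,x),(b,y),(b,z)} :: (nat\<times>nat) set) t \<subseteq> H"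
    by (intro bexI[of _ "(a,b,x,y,z)"]) auto
qed

lemma K32_PB: "patbound n m 6 (\<lambda>H. K32 (\<lambda>p q. p < n \<and> q < m \<and> (p,q) \<in> H)) (n^3*m^2)"
proof (rule patboundI)
  let ?T = "{(a,b,c,x,y). a<n \<and> b<n \<and> c<n \<and> x<m \<and> y<(m::nat) \<and> a\<noteq>(b::nat) \<and> a\<noteq>c \<and> b\<noteq>c \<and> x\<noteq>y}"
  let ?F = "\<lambda>(a,b,c,x,y). {(a,x),(a,y),(b,x),(b,y),(c,x),(c,y)} :: (nat\<times>nat) set"
  have sub: "?T \<subseteq> {..<n}\<times>{..<n}\<times>{..<n}\<times>{..<m}\<times>{..<m}" by auto
  show "finite ?T" by (rule finite_subset[OF sub]) auto
  show "card ?T \<le> n^3*m^2"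
    using card_mono[OF _ sub] by (simp add: card_cartesian_product power2_eq_square power3_eq_cube)
  fix t assume "t \<in> ?T"
  then obtain a b c x y where t: "t = (a,b,c,x,y)" "a<n" "b<n" "c<n" "x<m" "y<m" "a\<noteq>b" "a\<noteq>c" "b\<noteq>c" "x\<noteq>y" by auto
  show "?F t \<subseteq> {..<n}\<times>{..<m} \<and> finite (?F t) \<and> card (?F t) \<ge> 6" using t by auto
next
  fix H assume "K32 (\<lambda>p q. p < n \<and> q < m \<and> (p,q) \<in> H)"
  then obtain a b c x y where "a\<noteq>b" "a\<noteq>c" "b\<noteq>c" "x\<noteq>y" and h:
    "a<n" "b<n" "c<n" "x<m" "y<m" "(a,x)\<in>H" "(a,y)\<in>H" "(b,x)\<in>H" "(b,y)\<in>H" "(c,x)\<in>H" "(c,y)\<in>H"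
    unfolding K32_def by blast
  then show "\<exists>t\<in>{(a,b,c,x,y). a<n \<and> b<n \<and> c<n \<and> x<m \<and> y<(m::nat) \<and> a\<noteq>(b::nat) \<and> a\<noteq>c \<and> b\<noteq>c \<and> x\<noteq>y}.
     (\<lambda>(a,b,c,x,y). {(a,x),(a,y),(b,x),(b,y),(c,x),(c,y)} :: (nat\<times>nat) set) t \<subseteq> H"
    by (intro bexI[of _ "(a,b,c,x,y)"]) auto
qed

lemma D3_PB: "patbound n m 7 (\<lambda>H. D3 (\<lambda>p q. p < n \<and> q < m \<and> (p,q) \<in> H)) (n^3*m^3)"
proof (rule patboundI)
  let ?T = "{(s,t,t',u,v,v'). s<n \<and> t<n \<and> t'<n \<and> u<m \<and> v<m \<and> v'<(m::nat) \<and>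
      s\<noteq>(t::nat) \<and> s\<noteq>t' \<and> t\<noteq>t' \<and> u\<noteq>v \<and> u\<noteq>v' \<and> v\<noteq>v'}"
  let ?F = "\<lambda>(s,t,t',u,v,v'). {(s,u),(s,v),(t,u),(t,v),(s,v'),(t',u),(t',v')} :: (nat\<times>nat) set"
  have sub: "?T \<subseteq> {..<n}\<times>{..<n}\<times>{..<n}\<times>{..<m}\<times>{..<m}\<times>{..<m}" by auto
  show "finite ?T" by (rule finite_subset[OF sub]) auto
  show "card ?T \<le> n^3*m^3"
    using card_mono[OF _ sub] by (simp add: card_cartesian_product power2_eq_square power3_eq_cube)
  fix tt assume "tt \<in> ?T"
  then obtain s t t' u v v' where t: "tt = (s,t,t',u,v,v')" "s<n" "t<n" "t'<n" "u<m" "v<m" "v'<m"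
    "s\<noteq>t" "s\<noteq>t'" "t\<noteq>t'" "u\<noteq>v" "u\<noteq>v'" "v\<noteq>v'" by auto
  show "?F tt \<subseteq> {..<n}\<times>{..<m} \<and> finite (?F tt) \<and> card (?F tt) \<ge> 7" using t by auto
next
  fix H assume "D3 (\<lambda>p q. p < n \<and> q < m \<and> (p,q) \<in> H)"
  then obtain s t t' u v v' where "s\<noteq>t" "s\<noteq>t'" "t\<noteq>t'" "u\<noteq>v" "u\<noteq>v'" "v\<noteq>v'" and h:
    "s<n" "t<n" "t'<n" "u<m" "v<m" "v'<m" "(s,u)\<in>H" "(s,v)\<in>H" "(t,u)\<in>H" "(t,v)\<in>H" "(s,v')\<in>H" "(t',u)\<in>H" "(t',v')\<in>H"
    unfolding D3_def by blast
  then show "\<exists>tt\<in>{(s,t,t',u,v,v'). s<n \<and> t<n \<and> t'<n \<and> u<m \<and> v<m \<and> v'<(m::nat) \<and>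
      s\<noteq>(t::nat) \<and> s\<noteq>t' \<and> t\<noteq>t' \<and> u\<noteq>v \<and> u\<noteq>v' \<and> v\<noteq>v'}.
     (\<lambda>(s,t,t',u,v,v'). {(s,u),(s,v),(t,u),(t,v),(s,v'),(t',u),(t',v')} :: (nat\<times>nat) set) tt \<subseteq> H"
    by (intro bexI[of _ "(s,t,t',u,v,v')"]) auto
qed

lemma D4_PB: "patbound n m 8 (\<lambda>H. D4 (\<lambda>p q. p < n \<and> q < m \<and> (p,q) \<in> H)) (n^3*m^4)"
proof (rule patboundI)
  let ?T = "{(s,t,t',x,y,z,w). s<n \<and> t<n \<and> t'<n \<and> x<m \<and> y<m \<and> z<m \<and> w<(m::nat) \<and>
      s\<noteq>(t::nat) \<and> s\<noteq>t' \<and> t\<noteq>t' \<and> x\<noteq>y \<and> x\<noteq>z \<and> x\<noteq>w \<and> y\<noteq>z \<and> y\<noteq>w \<and> z\<noteq>w}"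
  let ?F = "\<lambda>(s,t,t',x,y,z,w). {(s,x),(s,y),(t,x),(t,y),(s,z),(s,w),(t',z),(t',w)} :: (nat\<times>nat) set"
  have sub: "?T \<subseteq> {..<n}\<times>{..<n}\<times>{..<n}\<times>{..<m}\<times>{..<m}\<times>{..<m}\<times>{..<m}" by auto
  show "finite ?T" by (rule finite_subset[OF sub]) auto
  show "card ?T \<le> n^3*m^4"
    using card_mono[OF _ sub] by (simp add: card_cartesian_product power2_eq_square power3_eq_cube power4_eq_xxxx)
  fix tt assume "tt \<in> ?T"
  then obtain s t t' x y z w where t: "tt = (s,t,t',x,y,z,w)" "s<n" "t<n" "t'<n" "x<m" "y<m" "z<m" "w<m"
    "s\<noteq>t" "s\<noteq>t'" "t\<noteq>t'" "x\<noteq>y" "x\<noteq>z" "x\<noteq>w" "y\<noteq>z" "y\<noteq>w" "z\<noteq>w" by auto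
  show "?F tt \<subseteq> {..<n}\<times>{..<m} \<and> finite (?F tt) \<and> card (?F tt) \<ge> 8" using t by auto
next
  fix H assume "D4 (\<lambda>p q. p < n \<and> q < m \<and> (p,q) \<in> H)"
  then obtain s t t' x y z w where "s\<noteq>t" "s\<noteq>t'" "t\<noteq>t'" "x\<noteq>y" "x\<noteq>z" "x\<noteq>w" "y\<noteq>z" "y\<noteq>w" "z\<noteq>w" and h:
    "s<n" "t<n" "t'<n" "x<m" "y<m" "z<m" "w<m" "(s,x)\<in>H" "(s,y)\<in>H" "(t,x)\<in>H" "(t,y)\<in>H" "(s,z)\<in>H" "(s,w)\<in>H" "(t',z)\<in>H" "(t',w)\<in>H"
    unfolding D4_def by blast
  then show "\<exists>tt\<in>{(s,t,t',x,y,z,w). s<n \<and> t<n \<and> t'<n \<and> x<m \<and> y<m \<and> z<m \<and> w<(m::nat) \<and>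
      s\<noteq>(t::nat) \<and> s\<noteq>t' \<and> t\<noteq>t' \<and> x\<noteq>y \<and> x\<noteq>z \<and> x\<noteq>w \<and> y\<noteq>z \<and> y\<noteq>w \<and> z\<noteq>w}.
     (\<lambda>(s,t,t',x,y,z,w). {(s,x),(s,y),(t,x),(t,y),(s,z),(s,w),(t',z),(t',w)} :: (nat\<times>nat) set) tt \<subseteq> H"
    by (intro bexI[of _ "(s,t,t',x,y,z,w)"]) auto
qed

lemma D5_PB: "patbound n m 8 (\<lambda>H. D5 (\<lambda>p q. p < n \<and> q < m \<and> (p,q) \<in> H)) (n^4*m^3)"
proof (rule patboundI)
  let ?T = "{(a,b,c,d,u,v,w). a<n \<and> b<n \<and> c<n \<and> d<n \<and> u<m \<and> v<m \<and> w<(m::nat) \<and>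
      a\<noteq>(b::nat) \<and> a\<noteq>c \<and> a\<noteq>d \<and> b\<noteq>c \<and> b\<noteq>d \<and> c\<noteq>d \<and> u\<noteq>v \<and> u\<noteq>w \<and> v\<noteq>w}"
  let ?F = "\<lambda>(a,b,c,d,u,v,w). {(a,u),(a,v),(b,u),(b,v),(c,u),(c,w),(d,u),(d,w)} :: (nat\<times>nat) set"
  have sub: "?T \<subseteq> {..<n}\<times>{..<n}\<times>{..<n}\<times>{..<n}\<times>{..<m}\<times>{..<m}\<times>{..<m}" by auto
  show "finite ?T" by (rule finite_subset[OF sub]) auto
  show "card ?T \<le> n^4*m^3"
    using card_mono[OF _ sub] by (simp add: card_cartesian_product power2_eq_square power3_eq_cube power4_eq_xxxx)
  fix tt assume "tt \<in> ?T"
  then obtain a b c d u v w where t: "tt = (a,b,c,d,u,v,w)" "a<n" "b<n" "c<n" "d<n" "u<m" "v<m" "w<m"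
    "a\<noteq>b" "a\<noteq>c" "a\<noteq>d" "b\<noteq>c" "b\<noteq>d" "c\<noteq>d" "u\<noteq>v" "u\<noteq>w" "v\<noteq>w" by auto
  show "?F tt \<subseteq> {..<n}\<times>{..<m} \<and> finite (?F tt) \<and> card (?F tt) \<ge> 8" using t by auto
next
  fix H assume "D5 (\<lambda>p q. p < n \<and> q < m \<and> (p,q) \<in> H)"
  then obtain a b c d u v w where "a\<noteq>b" "a\<noteq>c" "a\<noteq>d" "b\<noteq>c" "b\<noteq>d" "c\<noteq>d" "u\<noteq>v" "u\<noteq>w" "v\<noteq>w" and h:
    "a<n" "b<n" "c<n" "d<n" "u<m" "v<m" "w<m" "(a,u)\<in>H" "(a,v)\<in>H" "(b,u)\<in>H" "(b,v)\<in>H" "(c,u)\<in>H" "(c,w)\<in>H" "(d,u)\<in>H" "(d,w)\<in>H"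
    unfolding D5_def by blast
  then show "\<exists>tt\<in>{(a,b,c,d,u,v,w). a<n \<and> b<n \<and> c<n \<and> d<n \<and> u<m \<and> v<m \<and> w<(m::nat) \<and>
      a\<noteq>(b::nat) \<and> a\<noteq>c \<and> a\<noteq>d \<and> b\<noteq>c \<and> b\<noteq>d \<and> c\<noteq>d \<and> u\<noteq>v \<and> u\<noteq>w \<and> v\<noteq>w}.
     (\<lambda>(a,b,c,d,u,v,w). {(a,u),(a,v),(b,u),(b,v),(c,u),(c,w),(d,u),(d,w)} :: (nat\<times>nat) set) tt \<subseteq> H"
    by (intro bexI[of _ "(a,b,c,d,u,v,w)"]) auto
qed


lemma patbound_event:
  fixes U :: "real measure"
  assumes U: "prob_space U" "sets U = sets borel" and pb: "patbound n m e P N"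
  shows "\<exists>B. B \<in> sets (PiM ({..<n}\<times>{..<m}) (\<lambda>_. U)) \<and>
     measure (PiM ({..<n}\<times>{..<m}) (\<lambda>_. U)) B \<le> real N * measure U {x. x > c} ^ e \<and>
     (\<forall>\<omega>\<in>space (PiM ({..<n}\<times>{..<m}) (\<lambda>_. U)). P {p. \<omega> p > c} \<longrightarrow> \<omega> \<in> B)"
proof -
  obtain FF where FF: "finite FF" "card FF \<le> N" "\<And>F. F\<in>FF \<Longrightarrow> F \<subseteq> {..<n}\<times>{..<m} \<and> finite F \<and> card F \<ge> e"
    "\<And>H. P H \<Longrightarrow> \<exists>F\<in>FF. F \<subseteq> H"
    using pb unfolding patbound_def by blast
  let ?M = "PiM ({..<n}\<times>{..<m}) (\<lambda>_. U)"
  let ?B = "\<Union>F\<in>FF. {\<omega>\<in>space ?M. \<forall>p\<in>id F. \<omega> p > c}"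
  have 1: "?B \<in> sets ?M" by (rule union_cyl(1)[OF U FF(1)]) (use FF(3) in auto)
  have "measure ?M ?B \<le> real (card FF) * measure U {x. x > c} ^ e"
    by (rule union_cyl(2)[OF U FF(1)]) (use FF(3) in auto)
  also have "\<dots> \<le> real N * measure U {x. x > c} ^ e"
    using FF(2) by (intro mult_right_mono) auto
  finally have 2: "measure ?M ?B \<le> real N * measure U {x. x > c} ^ e" .
  have 3: "\<forall>\<omega>\<in>space ?M. P {p. \<omega> p > c} \<longrightarrow> \<omega> \<in> ?B"
  proof (intro ballI impI)
    fix \<omega> assume "\<omega> \<in> space ?M" "P {p. \<omega> p > c}"
    then obtain F where "F \<in> FF" "F \<subseteq> {p. \<omega> p > c}" using FF(4) by blast
    then show "\<omega> \<in> ?B" using \<open>\<omega> \<in> space ?M\<close> by auto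
  qed
  show ?thesis using 1 2 3 by blast
qed

lemma over_event:
  fixes U :: "real measure" and n m :: nat
  assumes U: "prob_space U" "sets U = sets borel" "measure U {0..1} = 1"
  shows "\<exists>B. B \<in> sets (PiM ({..<n}\<times>{..<m}) (\<lambda>_. U)) \<and>
     measure (PiM ({..<n}\<times>{..<m}) (\<lambda>_. U)) B \<le> 0 \<and>
     (\<forall>\<omega>\<in>space (PiM ({..<n}\<times>{..<m}) (\<lambda>_. U)). (\<exists>i<n. \<exists>j<m. \<omega> (i,j) > 1) \<longrightarrow> \<omega> \<in> B)"
proof -
  interpret prob_space U by (rule U(1))
  have sp: "space U = UNIV" using sets_eq_imp_space_eq[OF U(2)] by simp
  have "measure U (space U - {0..1}) = 1 - measure U {0..1}"
    by (rule prob_compl) (use U(2) in simp)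
  then have z: "measure U (space U - {0..1}) = 0" using U(3) by simp
  have "measure U {x::real. x > 1} \<le> measure U (space U - {0..1})"
    by (rule finite_measure_mono) (use sp U(2) in auto)
  then have z1: "measure U {x::real. x > 1} = 0" using z measure_nonneg[of U "{x::real. x > 1}"] by linarith
  let ?M = "PiM ({..<n}\<times>{..<m}) (\<lambda>_. U)"
  let ?B = "\<Union>p\<in>{..<n}\<times>{..<m}. {\<omega>\<in>space ?M. \<forall>p'\<in>{p}. \<omega> p' > 1}"
  have 1: "?B \<in> sets ?M" by (rule union_cyl(1)[OF U(1,2)]) (auto intro: finite_cartesian_product)
  have "measure ?M ?B \<le> real (card ({..<n}\<times>{..<m})) * measure U {x. x > 1} ^ 1"
    by (rule union_cyl(2)[OF U(1,2)]) (auto intro: finite_cartesian_product)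
  then have 2: "measure ?M ?B \<le> 0" using z1 by simp
  have 3: "\<forall>\<omega>\<in>space ?M. (\<exists>i<n. \<exists>j<m. \<omega> (i,j) > 1) \<longrightarrow> \<omega> \<in> ?B" by auto
  show ?thesis using 1 2 3 by blast
qed


lemma main_bound:
  fixes U :: "real measure" and n m :: nat
  assumes U: "prob_space U" "sets U = sets borel" "measure U {0..1} = 1"
    and t: "\<tau> > 1/2" "\<tau> < 1"
  shows "measure (PiM ({..<n}\<times>{..<m}) (\<lambda>_. U))
     {\<omega> \<in> space (PiM ({..<n}\<times>{..<m}) (\<lambda>_. U)).
        max_degree_le n m (Ethr n m (\<lambda>i j. \<omega> (i, j)) \<tau> - Estar n m (\<lambda>i j. \<omega> (i, j)) 2 \<tau>) 2}
     \<ge> 1 - (real (n^2*m^3) * measure U {x. x > 2*\<tau>-1} ^ 6 + real (n^3*m^2) * measure U {x. x > 2*\<tau>-1} ^ 6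
         + real (n^3*m^3) * measure U {x. x > 2*\<tau>-1} ^ 7 + real (n^3*m^4) * measure U {x. x > 2*\<tau>-1} ^ 8
         + real (n^4*m^3) * measure U {x. x > 2*\<tau>-1} ^ 8)"
    (is "measure ?M ?G \<ge> 1 - (?b1 + ?b2 + ?b3 + ?b4 + ?b5)")
proof -
  let ?c = "2*\<tau>-1"
  interpret P: prob_space ?M by (rule prob_space_PiM) (use U(1) in auto)
  have Gm: "?G \<in> sets ?M"
    by (rule good_meas[where u="\<lambda>\<omega> i j. \<omega> (i,j)"]) (rule coord_meas[OF U(2)])
  obtain B0 where B0: "B0 \<in> sets ?M" "measure ?M B0 \<le> 0"
    "\<forall>\<omega>\<in>space ?M. (\<exists>i<n. \<exists>j<m. \<omega> (i,j) > 1) \<longrightarrow> \<omega> \<in> B0"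
    using over_event[OF U] by blast
  obtain B1 where B1: "B1 \<in> sets ?M" "measure ?M B1 \<le> ?b1"
    "\<forall>\<omega>\<in>space ?M. K23 (\<lambda>p q. p < n \<and> q < m \<and> (p,q) \<in> {p. \<omega> p > ?c}) \<longrightarrow> \<omega> \<in> B1"
    using patbound_event[OF U(1,2) K23_PB, of n m ?c] by blast
  obtain B2 where B2: "B2 \<in> sets ?M" "measure ?M B2 \<le> ?b2"
    "\<forall>\<omega>\<in>space ?M. K32 (\<lambda>p q. p < n \<and> q < m \<and> (p,q) \<in> {p. \<omega> p > ?c}) \<longrightarrow> \<omega> \<in> B2"
    using patbound_event[OF U(1,2) K32_PB, of n m ?c] by blast
  obtain B3 where B3: "B3 \<in> sets ?M" "measure ?M B3 \<le> ?b3"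
    "\<forall>\<omega>\<in>space ?M. D3 (\<lambda>p q. p < n \<and> q < m \<and> (p,q) \<in> {p. \<omega> p > ?c}) \<longrightarrow> \<omega> \<in> B3"
    using patbound_event[OF U(1,2) D3_PB, of n m ?c] by blast
  obtain B4 where B4: "B4 \<in> sets ?M" "measure ?M B4 \<le> ?b4"
    "\<forall>\<omega>\<in>space ?M. D4 (\<lambda>p q. p < n \<and> q < m \<and> (p,q) \<in> {p. \<omega> p > ?c}) \<longrightarrow> \<omega> \<in> B4"
    using patbound_event[OF U(1,2) D4_PB, of n m ?c] by blast
  obtain B5 where B5: "B5 \<in> sets ?M" "measure ?M B5 \<le> ?b5"
    "\<forall>\<omega>\<in>space ?M. D5 (\<lambda>p q. p < n \<and> q < m \<and> (p,q) \<in> {p. \<omega> p > ?c}) \<longrightarrow> \<omega> \<in> B5"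
    using patbound_event[OF U(1,2) D5_PB, of n m ?c] by blast
  have sub: "space ?M - ?G \<subseteq> B0 \<union> B1 \<union> B2 \<union> B3 \<union> B4 \<union> B5"
  proof
    fix \<omega> assume w: "\<omega> \<in> space ?M - ?G"
    show "\<omega> \<in> B0 \<union> B1 \<union> B2 \<union> B3 \<union> B4 \<union> B5"
    proof (rule ccontr)
      assume nin: "\<omega> \<notin> B0 \<union> B1 \<union> B2 \<union> B3 \<union> B4 \<union> B5"
      have le: "\<forall>i<n. \<forall>j<m. \<omega> (i,j) \<le> 1" using B0(3) w nin by force
      have "\<not> BadG (\<lambda>p q. p < n \<and> q < m \<and> (p,q) \<in> {p. \<omega> p > ?c})"
        unfolding BadG_def using B1(3) B2(3) B3(3) B4(3) B5(3) w nin by blast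
      then have nb: "\<not> BadG (\<lambda>p q. p < n \<and> q < m \<and> \<omega> (p,q) > ?c)" by simp
      have "max_degree_le n m (Ethr n m (\<lambda>i j. \<omega> (i, j)) \<tau> - Estar n m (\<lambda>i j. \<omega> (i, j)) 2 \<tau>) 2"
        by (rule det_good[OF t]) (use le nb in auto)
      then show False using w by simp
    qed
  qed
  have "measure ?M (space ?M - ?G) \<le> measure ?M (B0 \<union> B1 \<union> B2 \<union> B3 \<union> B4 \<union> B5)"
    by (rule P.finite_measure_mono[OF sub]) (use B0 B1 B2 B3 B4 B5 in auto)
  also have "\<dots> \<le> measure ?M B0 + measure ?M B1 + measure ?M B2 + measure ?M B3 + measure ?M B4 + measure ?M B5"
    using B0(1) B1(1) B2(1) B3(1) B4(1) B5(1)
    by (smt (verit) measure_Un_le sets.Un)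
  also have "\<dots> \<le> ?b1 + ?b2 + ?b3 + ?b4 + ?b5" using B0 B1 B2 B3 B4 B5 by linarith
  finally have "measure ?M (space ?M - ?G) \<le> ?b1 + ?b2 + ?b3 + ?b4 + ?b5" .
  moreover have "measure ?M (space ?M - ?G) = 1 - measure ?M ?G" by (rule P.prob_compl[OF Gm])
  ultimately show ?thesis by linarith
qed


lemma asy_L: "(\<lambda>n::nat. ln (2 * real n) / real n) \<longlonglongrightarrow> 0" by real_asymp

lemma asy_terms:
  "(\<lambda>n::nat. real n ^ 2 * (2 * real n) ^ 3 * (ln (2 * real n) / real n) ^ 6) \<longlonglongrightarrow> 0"
  "(\<lambda>n::nat. real n ^ 3 * (2 * real n) ^ 2 * (ln (2 * real n) / real n) ^ 6) \<longlonglongrightarrow> 0"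
  "(\<lambda>n::nat. real n ^ 3 * (2 * real n) ^ 3 * (ln (2 * real n) / real n) ^ 7) \<longlonglongrightarrow> 0"
  "(\<lambda>n::nat. real n ^ 3 * (2 * real n) ^ 4 * (ln (2 * real n) / real n) ^ 8) \<longlonglongrightarrow> 0"
  "(\<lambda>n::nat. real n ^ 4 * (2 * real n) ^ 3 * (ln (2 * real n) / real n) ^ 8) \<longlonglongrightarrow> 0"
  by real_asymp+

lemma term_zero:
  assumes "(\<lambda>n::nat. real n ^ a * (2 * real n) ^ b * (ln (2 * real n) / real n) ^ e) \<longlonglongrightarrow> 0"
  shows "(\<lambda>n::nat. real (n^a * (2*n)^b) * (K * (ln (2 * real n) / real n)) ^ e) \<longlonglongrightarrow> 0"
proof -
  have eq: "(\<lambda>n::nat. real (n^a * (2*n)^b) * (K * (ln (2 * real n) / real n)) ^ e) =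
     (\<lambda>n. K ^ e * (real n ^ a * (2 * real n) ^ b * (ln (2 * real n) / real n) ^ e))"
    by (rule ext) (simp only: power_mult_distrib[of K] of_nat_mult of_nat_power of_nat_numeral mult_ac)
  show ?thesis unfolding eq by (rule tendsto_mult_right_zero[OF assms])
qed


theorem proposition5:
  fixes U :: "real measure" and \<theta>l \<theta>u q :: real
  assumes "prob_space U" and "sets U = sets borel"
    and "measure U {0..1} = 1"
    and "\<theta>l > 0" and "\<theta>u > 0" and "q > 0"
    and "poly_bounded_below U \<theta>l q" and "poly_bounded_above U \<theta>u q"
  shows "(\<lambda>n. measure (PiM ({..<n} \<times> {..<2*n}) (\<lambda>_. U))
            {\<omega> \<in> space (PiM ({..<n} \<times> {..<2*n}) (\<lambda>_. U)).
               max_degree_le n (2*n)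
                 (Ethr n (2*n) (\<lambda>i j. \<omega> (i, j)) (tau \<theta>l q n (2*n))
                  - Estar n (2*n) (\<lambda>i j. \<omega> (i, j)) 2 (tau \<theta>l q n (2*n))) 2})
         \<longlonglongrightarrow> 1"
  (is "?f \<longlonglongrightarrow> 1")
proof -
  note U = assms(1,2,3)
  define L where "L n = ln (2 * real n) / real n" for n :: nat
  define B where "B n = 64 * ln (real (2*n)) / (\<theta>l * real n)" for n :: nat
  define \<alpha> where "\<alpha> n = B n powr (1/q)" for n
  define K where "K = \<theta>u * 2 powr q * 64 / \<theta>l"
  have BL: "B n = (64/\<theta>l) * L n" for n unfolding B_def L_def by simp
  have tau_eq: "tau \<theta>l q n (2*n) = 1 - \<alpha> n" for n unfolding tau_def \<alpha>_def B_def by simp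
  have B0: "B \<longlonglongrightarrow> 0" unfolding BL[abs_def] L_def
    by (rule tendsto_mult_right_zero[OF asy_L])
  have Bnn: "\<forall>\<^sub>F n in sequentially. 0 \<le> B n"
    by (rule eventually_sequentiallyI[of 1]) (use assms(4) in \<open>auto simp: B_def\<close>)
  have a0: "\<alpha> \<longlonglongrightarrow> 0" unfolding \<alpha>_def
    by (rule tendsto_zero_powrI[OF B0 tendsto_const Bnn]) (use assms(6) in simp)
  have ev1: "\<forall>\<^sub>F n in sequentially. \<alpha> n < 1/4" using order_tendstoD(2)[OF a0, of "1/4"] by simp
  have ev2: "\<forall>\<^sub>F n in sequentially. n \<ge> (1::nat)" by (rule eventually_ge_at_top)
  define R where "R n = real (n^2*(2*n)^3) * (K * L n)^6 + real (n^3*(2*n)^2) * (K * L n)^6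
     + real (n^3*(2*n)^3) * (K * L n)^7 + real (n^3*(2*n)^4) * (K * L n)^8
     + real (n^4*(2*n)^3) * (K * L n)^8" for n :: nat
  have R0: "R \<longlonglongrightarrow> 0" unfolding R_def[abs_def] L_def
    by (intro tendsto_add_zero term_zero asy_terms)
  have low: "\<forall>\<^sub>F n in sequentially. 1 - R n \<le> ?f n"
    using ev1 ev2
  proof eventually_elim
    case (elim n)
    have Bpos: "B n > 0" unfolding B_def using elim(2) assms(4) by simp
    then have apos: "\<alpha> n > 0" unfolding \<alpha>_def by simp
    let ?\<tau> = "tau \<theta>l q n (2*n)"
    have t: "?\<tau> > 1/2" "?\<tau> < 1" using tau_eq[of n] elim(1) apos by auto
    let ?Ph = "measure U {x. x > 2*?\<tau>-1}"
    have Ph0: "?Ph \<ge> 0" by simp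
    have ce: "2*?\<tau>-1 = 1 - 2 * \<alpha> n" using tau_eq[of n] by simp
    have "?Ph = measure U {x. x > 1 - 2 * \<alpha> n}" by (simp only: ce)
    also have "\<dots> \<le> \<theta>u * (2 * \<alpha> n) powr q"
      using assms(8) elim(1) apos unfolding poly_bounded_above_def by auto
    also have "(2 * \<alpha> n) powr q = 2 powr q * B n"
      using Bpos apos assms(6) unfolding \<alpha>_def by (simp add: powr_mult powr_powr)
    finally have "?Ph \<le> K * L n" unfolding K_def BL by (simp add: field_simps)
    then have pe: "?Ph ^ e \<le> (K * L n) ^ e" for e by (intro power_mono Ph0)
    have mb: "?f n \<ge> 1 - (real (n^2*(2*n)^3) * ?Ph ^ 6 + real (n^3*(2*n)^2) * ?Ph ^ 6
         + real (n^3*(2*n)^3) * ?Ph ^ 7 + real (n^3*(2*n)^4) * ?Ph ^ 8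
         + real (n^4*(2*n)^3) * ?Ph ^ 8)"
      by (rule main_bound[OF U t])
    have "real (n^2*(2*n)^3) * ?Ph ^ 6 + real (n^3*(2*n)^2) * ?Ph ^ 6
         + real (n^3*(2*n)^3) * ?Ph ^ 7 + real (n^3*(2*n)^4) * ?Ph ^ 8
         + real (n^4*(2*n)^3) * ?Ph ^ 8 \<le> R n"
      unfolding R_def by (intro add_mono mult_left_mono pe) auto
    then show ?case using mb by linarith
  qed
  have up: "\<forall>\<^sub>F n in sequentially. ?f n \<le> 1"
  proof (rule always_eventually, rule allI)
    fix n :: nat
    interpret P: prob_space "PiM ({..<n} \<times> {..<2*n}) (\<lambda>_. U)"
      by (rule prob_space_PiM) (use U(1) in auto)
    show "?f n \<le> 1" by (rule P.prob_le_1)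
  qed
  have R1: "(\<lambda>n. 1 - R n) \<longlonglongrightarrow> 1" using tendsto_diff[OF tendsto_const R0, of 1] by simp
  show ?thesis by (rule tendsto_sandwich[OF low up R1 tendsto_const])
qed

end
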